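(* The set of pixellated $\ell_1$-convex subsets of $\mathbb{R}^n$ is dense in the space of compact $\ell_1$-convex subsets of $\mathbb{R}^n$ with respect to the Hausdorff metric.
   Context: $Q_n=[-\tfrac12,\tfrac12]^n$ and $\mathbf{H}=\{m+\tfrac12:m\in\mathbb{Z}\}$. For $\lambda>0$, a subset of $\mathbb{R}^n$ is $\lambda$-pixellated if it is a finite union of cubes $\lambda(h+Q_n)$ with $h\in\mathbf{H}^n$; it is pixellated if it is $\lambda$-pixellated for some $\lambda>0$. A subset $Z\subseteq\mathbb{R}^n$ is $\ell_1$-convex if for all $z,z'\in Z$, with $D=\sum_i|z_i-z'_i|$, there is $\gamma\colon[0,D]\to Z$ with $\gamma(0)=z,\gamma(D)=z'$ and $\sum_i|\gamma_i(t)-\gamma_i(t')|=|t-t'|$ for all $t,t'$. The Hausdorff distance between compact sets $X,Y$ is $\inf\{\delta>0:X\subseteq Y+\delta B_n,\ Y\subseteq X+\delta B_n\}$ with $B_n$ the closed unit $\ell_1$ ball. *)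

theory Defs
  imports "HOL-Analysis.Analysis"
begin

definition l1dist :: "real^'n \<Rightarrow> real^'n \<Rightarrow> real" where
  "l1dist x y = (\<Sum>i\<in>UNIV. \<bar>x$i - y$i\<bar>)"

definition unit_cube :: "(real^'n) set" where
  "unit_cube = {x. \<forall>i. \<bar>x$i\<bar> \<le> 1/2}"

definition half_int_point :: "real^'n \<Rightarrow> bool" where
  "half_int_point h \<longleftrightarrow> (\<forall>i. \<exists>m::int. h$i = of_int m + 1/2)"

definition pixel :: "real \<Rightarrow> real^'n \<Rightarrow> (real^'n) set" where
  "pixel lam h = {lam *\<^sub>R (h + q) | q. q \<in> unit_cube}"

definition lambda_pixellated :: "real \<Rightarrow> (real^'n) set \<Rightarrow> bool" where
  "lambda_pixellated lam S \<longleftrightarrow>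
     (\<exists>F. finite F \<and> (\<forall>h\<in>F. half_int_point h) \<and> S = (\<Union>h\<in>F. pixel lam h))"

definition pixellated :: "(real^'n) set \<Rightarrow> bool" where
  "pixellated S \<longleftrightarrow> (\<exists>lam>0. lambda_pixellated lam S)"

definition l1_convex :: "(real^'n) set \<Rightarrow> bool" where
  "l1_convex Z \<longleftrightarrow> (\<forall>z\<in>Z. \<forall>z'\<in>Z. \<exists>\<gamma> :: real \<Rightarrow> real^'n.
      \<gamma> 0 = z \<and> \<gamma> (l1dist z z') = z' \<and>
      (\<forall>t\<in>{0..l1dist z z'}. \<gamma> t \<in> Z) \<and>
      (\<forall>t\<in>{0..l1dist z z'}. \<forall>t'\<in>{0..l1dist z z'}. l1dist (\<gamma> t) (\<gamma> t') = \<bar>t - t'\<bar>))"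

definition l1_ball :: "(real^'n) set" where
  "l1_ball = {x. (\<Sum>i\<in>UNIV. \<bar>x$i\<bar>) \<le> 1}"

definition l1_thicken :: "(real^'n) set \<Rightarrow> real \<Rightarrow> (real^'n) set" where
  "l1_thicken Y \<delta> = {y + \<delta> *\<^sub>R b | y b. y \<in> Y \<and> b \<in> l1_ball}"

definition l1_hausdist :: "(real^'n) set \<Rightarrow> (real^'n) set \<Rightarrow> real" where
  "l1_hausdist X Y = Inf {\<delta>. \<delta> > 0 \<and> X \<subseteq> l1_thicken Y \<delta> \<and> Y \<subseteq> l1_thicken X \<delta>}"

end

theory Submission
  imports Defs
begin


definition compat :: "real \<Rightarrow> real \<Rightarrow> real \<Rightarrow> bool" where
  "compat lam a b \<longleftrightarrow> (\<exists>m::int. lam * of_int m \<le> a \<and> a \<le> lam * (of_int m+1) \<and> lam * of_int m \<le> b \<and> b \<le> lam * (of_int m+1))"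

lemma compat_sym: "compat lam a b \<Longrightarrow> compat lam b a"
  unfolding compat_def by blast

lemma compat_refl: assumes "lam > 0" shows "compat lam a a"
proof -
  have "real_of_int \<lfloor>a/lam\<rfloor> \<le> a/lam" "a/lam < real_of_int \<lfloor>a/lam\<rfloor> + 1" by linarith+
  have e: "lam * (a/lam) = a" using assms by simp
  have "lam * \<lfloor>a/lam\<rfloor> \<le> lam * (a/lam)"
    by (rule mult_left_mono) (use assms in auto)
  moreover have "lam * (a/lam) \<le> lam*(\<lfloor>a/lam\<rfloor>+1)"
    by (rule mult_left_mono) (use assms in auto)
  ultimately have "lam * of_int \<lfloor>a/lam\<rfloor> \<le> a" "a \<le> lam * (of_int \<lfloor>a/lam\<rfloor>+1)" using e by auto
  thus ?thesis unfolding compat_def by blast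
qed

lemma compat_dist: "compat lam a b \<Longrightarrow> \<bar>a - b\<bar> \<le> lam"
  unfolding compat_def by (auto simp: algebra_simps)

lemma int_le_from_mult: assumes "lam > 0" "lam * real_of_int m1 \<le> lam * (real_of_int m2 + 1)"
  shows "m1 \<le> m2 + 1"
proof -
  have "real_of_int m1 \<le> real_of_int m2 + 1" using assms by simp
  thus ?thesis by linarith
qed

lemma compat_between:
  assumes lam: "lam > 0" and a: "compat lam a z" and b: "compat lam b z"
    and x: "min a b \<le> x" "x \<le> max a b"
  shows "compat lam x z"
proof -
  obtain m1 :: int where m1: "lam * of_int m1 \<le> a" "a \<le> lam * (of_int m1+1)" "lam * of_int m1 \<le> z" "z \<le> lam * (of_int m1+1)"
    using a unfolding compat_def by blast
  obtain m2 :: int where m2: "lam * of_int m2 \<le> b" "b \<le> lam * (of_int m2+1)" "lam * of_int m2 \<le> z" "z \<le> lam * (of_int m2+1)"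
    using b unfolding compat_def by blast
  have x1: "x \<ge> a \<or> x \<ge> b" "x \<le> a \<or> x \<le> b" using x by linarith+
  have "m1 \<le> m2 + 1" using int_le_from_mult[OF lam, of m1 m2] m1(3) m2(4) by simp
  moreover have "m2 \<le> m1 + 1" using int_le_from_mult[OF lam, of m2 m1] m1(4) m2(3) by simp
  ultimately consider "m1 = m2" | "m2 = m1 + 1" | "m1 = m2 + 1" by linarith
  thus ?thesis
  proof cases
    case 1
    have "lam * of_int m2 = lam * of_int m1" using 1 by simp
    hence "lam * of_int m1 \<le> x" "x \<le> lam * (of_int m1+1)" using m1(1,2) m2(1,2) x1 1 by (smt (verit))+
    thus ?thesis unfolding compat_def using m1 by blast
  next
    case 2
    have e: "lam * real_of_int m2 = lam * (real_of_int m1 + 1)" using 2 by simp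
    have mono: "lam * of_int m1 \<le> lam * of_int m2" "lam * (of_int m1+1) \<le> lam * (of_int m2+1)" using 2 lam by simp_all
    show ?thesis
    proof (cases "x \<le> lam * (of_int m1+1)")
      case True
      have "lam * of_int m1 \<le> x" using m1(1) m2(1) x1 mono by (smt (verit))
      thus ?thesis unfolding compat_def using m1 True by blast
    next
      case False
      have "x \<le> lam * (of_int m2+1)" "lam * of_int m2 \<le> x" using m1(1,2) m2(1,2) x1 mono e False by (smt (verit) of_int_add of_int_1)+
      thus ?thesis unfolding compat_def using m2 by blast
    qed
  next
    case 3
    have e: "lam * real_of_int m1 = lam * (real_of_int m2 + 1)" using 3 by simp
    have mono: "lam * of_int m2 \<le> lam * of_int m1" "lam * (of_int m2+1) \<le> lam * (of_int m1+1)" using 3 lam by simp_all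
    show ?thesis
    proof (cases "x \<le> lam * (of_int m2+1)")
      case True
      have "lam * of_int m2 \<le> x" using m1(1) m2(1) x1 mono by (smt (verit))
      thus ?thesis unfolding compat_def using m2 True by blast
    next
      case False
      have "x \<le> lam * (of_int m1+1)" "lam * of_int m1 \<le> x" using m1(1,2) m2(1,2) x1 mono e False by (smt (verit) of_int_add of_int_1)+
      thus ?thesis unfolding compat_def using m1 by blast
    qed
  qed
qed

lemma compat_mismatch:
  assumes lam: "lam > 0" and a: "compat lam p z" and b: "compat lam p' z'"
    and d: "(z < z' \<and> p' < p) \<or> (z' < z \<and> p < p')"
    and y: "min z z' \<le> y" "y \<le> max z z'" and x: "min p p' \<le> x" "x \<le> max p p'"
  shows "compat lam x y"
proof -
  obtain m1 :: int where m1: "lam * of_int m1 \<le> p" "p \<le> lam * (of_int m1+1)" "lam * of_int m1 \<le> z" "z \<le> lam * (of_int m1+1)"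
    using a unfolding compat_def by blast
  obtain m2 :: int where m2: "lam * of_int m2 \<le> p'" "p' \<le> lam * (of_int m2+1)" "lam * of_int m2 \<le> z'" "z' \<le> lam * (of_int m2+1)"
    using b unfolding compat_def by blast
  have A: "lam * real_of_int m1 < lam * (real_of_int m2 + 1) \<Longrightarrow> m1 \<le> m2"
  proof -
    assume "lam * real_of_int m1 < lam * (real_of_int m2 + 1)"
    hence "real_of_int m1 < real_of_int m2 + 1" using lam by simp
    thus ?thesis by linarith
  qed
  have B: "lam * real_of_int m2 < lam * (real_of_int m1 + 1) \<Longrightarrow> m2 \<le> m1"
  proof -
    assume "lam * real_of_int m2 < lam * (real_of_int m1 + 1)"
    hence "real_of_int m2 < real_of_int m1 + 1" using lam by simp
    thus ?thesis by linarith
  qed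
  have m: "m1 = m2"
  proof -
    from d have "lam * real_of_int m1 < lam * (real_of_int m2 + 1) \<and> lam * real_of_int m2 < lam * (real_of_int m1 + 1)"
      using m1 m2 by auto
    thus ?thesis using A B by fastforce
  qed
  have x1: "x \<ge> p \<or> x \<ge> p'" "x \<le> p \<or> x \<le> p'" using x by linarith+
  have y1: "y \<ge> z \<or> y \<ge> z'" "y \<le> z \<or> y \<le> z'" using y by linarith+
  have "lam * of_int m1 \<le> x" "x \<le> lam * (of_int m1+1)" "lam * of_int m1 \<le> y" "y \<le> lam * (of_int m1+1)"
    using m1 m2 x1 y1 m by auto
  thus ?thesis unfolding compat_def by blast
qed

definition clampF :: "real \<Rightarrow> real \<Rightarrow> real \<Rightarrow> real" where
  "clampF p p' y = max (min p p') (min (max p p') y)"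

lemma clampF_mono: "y \<le> y' \<Longrightarrow> clampF p p' y \<le> clampF p p' y'"
  unfolding clampF_def by linarith

lemma clampF_compat:
  assumes lam: "lam > 0" and a: "compat lam p z" and b: "compat lam p' z'"
    and d: "(z \<le> z' \<and> p \<le> p') \<or> (z' \<le> z \<and> p' \<le> p)"
    and y: "min z z' \<le> y" "y \<le> max z z'"
  shows "compat lam (clampF p p' y) y"
proof -
  have yy: "compat lam y y" by (rule compat_refl[OF lam])
  have pp: "compat lam p p" by (rule compat_refl[OF lam])
  have pp': "compat lam p' p'" by (rule compat_refl[OF lam])
  have zp: "compat lam z p" using a by (rule compat_sym)
  have zp': "compat lam z' p'" using b by (rule compat_sym)
  from d show ?thesis
  proof
    assume d1: "z \<le> z' \<and> p \<le> p'"
    show ?thesis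
    proof (cases "y < p")
      case True
      hence e: "clampF p p' y = p" using d1 unfolding clampF_def by auto
      have "compat lam y p"
        by (rule compat_between[OF lam zp pp]) (use True d1 y in auto)
      thus ?thesis using e compat_sym by simp
    next
      case False
      show ?thesis
      proof (cases "y \<le> p'")
        case True
        hence "clampF p p' y = y" using False d1 unfolding clampF_def by auto
        thus ?thesis using yy by simp
      next
        case F2: False
        hence e: "clampF p p' y = p'" using d1 unfolding clampF_def by auto
        have "compat lam y p'"
          by (rule compat_between[OF lam zp' pp']) (use F2 d1 y in auto)
        thus ?thesis using e compat_sym by simp
      qed
    qed
  next
    assume d1: "z' \<le> z \<and> p' \<le> p"
    show ?thesis
    proof (cases "y < p'")
      case True
      hence e: "clampF p p' y = p'" using d1 unfolding clampF_def by auto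
      have "compat lam y p'"
        by (rule compat_between[OF lam zp' pp']) (use True d1 y in auto)
      thus ?thesis using e compat_sym by simp
    next
      case False
      show ?thesis
      proof (cases "y \<le> p")
        case True
        hence "clampF p p' y = y" using False d1 unfolding clampF_def by auto
        thus ?thesis using yy by simp
      next
        case F2: False
        hence e: "clampF p p' y = p" using d1 unfolding clampF_def by auto
        have "compat lam y p"
          by (rule compat_between[OF lam zp pp]) (use F2 d1 y in auto)
        thus ?thesis using e compat_sym by simp
      qed
    qed
  qed
qed



lemma l1dist_nonneg: "l1dist x y \<ge> 0"
  unfolding l1dist_def by (simp add: sum_nonneg)

lemma l1dist_sym: "l1dist x y = l1dist y x"
  unfolding l1dist_def by (simp add: abs_minus_commute)

lemma l1dist_zero: assumes "l1dist x y = 0" shows "x = y"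
proof -
  have "\<forall>i\<in>UNIV. \<bar>x$i - y$i\<bar> = 0"
    using assms unfolding l1dist_def by (subst sum_nonneg_eq_0_iff[symmetric]) auto
  thus ?thesis by (simp add: vec_eq_iff)
qed

lemma l1dist_comp: "\<bar>x$i - y$i\<bar> \<le> l1dist x y"
  unfolding l1dist_def by (rule member_le_sum) auto

lemma l1dist_termwise:
  assumes "l1dist a c = l1dist a b + l1dist b c"
  shows "\<bar>a$i - c$i\<bar> = \<bar>a$i - b$i\<bar> + \<bar>b$i - c$i\<bar>"
proof -
  have "(\<Sum>j\<in>UNIV. \<bar>a$j - b$j\<bar> + \<bar>b$j - c$j\<bar> - \<bar>a$j - c$j\<bar>) = 0"
    using assms unfolding l1dist_def by (simp add: sum.distrib sum_subtractf)
  moreover have "\<forall>j\<in>UNIV. \<bar>a$j - b$j\<bar> + \<bar>b$j - c$j\<bar> - \<bar>a$j - c$j\<bar> \<ge> 0" by auto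
  ultimately have "\<forall>j\<in>UNIV. \<bar>a$j - b$j\<bar> + \<bar>b$j - c$j\<bar> - \<bar>a$j - c$j\<bar> = 0"
    by (subst sum_nonneg_eq_0_iff[symmetric]) auto
  thus ?thesis by auto
qed

lemma geo_mono:
  fixes \<gamma> :: "real \<Rightarrow> real^'n"
  assumes iso: "\<forall>t\<in>{0..D}. \<forall>t'\<in>{0..D}. l1dist (\<gamma> t) (\<gamma> t') = \<bar>t - t'\<bar>"
    and st: "0 \<le> s" "s \<le> t" "t \<le> D"
  shows "\<gamma> 0 $ i \<le> \<gamma> D $ i \<Longrightarrow> \<gamma> s $ i \<le> \<gamma> t $ i"
    and "\<gamma> D $ i \<le> \<gamma> 0 $ i \<Longrightarrow> \<gamma> t $ i \<le> \<gamma> s $ i"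
proof -
  have "l1dist (\<gamma> 0) (\<gamma> t) = l1dist (\<gamma> 0) (\<gamma> s) + l1dist (\<gamma> s) (\<gamma> t)"
    using iso st by auto
  from l1dist_termwise[OF this, of i]
  have A: "\<bar>\<gamma> 0$i - \<gamma> t$i\<bar> = \<bar>\<gamma> 0$i - \<gamma> s$i\<bar> + \<bar>\<gamma> s$i - \<gamma> t$i\<bar>" .
  have "l1dist (\<gamma> s) (\<gamma> D) = l1dist (\<gamma> s) (\<gamma> t) + l1dist (\<gamma> t) (\<gamma> D)"
    using iso st by auto
  from l1dist_termwise[OF this, of i]
  have B: "\<bar>\<gamma> s$i - \<gamma> D$i\<bar> = \<bar>\<gamma> s$i - \<gamma> t$i\<bar> + \<bar>\<gamma> t$i - \<gamma> D$i\<bar>" .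
  show "\<gamma> 0 $ i \<le> \<gamma> D $ i \<Longrightarrow> \<gamma> s $ i \<le> \<gamma> t $ i" using A B by linarith
  show "\<gamma> D $ i \<le> \<gamma> 0 $ i \<Longrightarrow> \<gamma> t $ i \<le> \<gamma> s $ i" using A B by linarith
qed

lemma geo_cont:
  fixes \<gamma> :: "real \<Rightarrow> real^'n"
  assumes iso: "\<forall>t\<in>{0..D}. \<forall>t'\<in>{0..D}. l1dist (\<gamma> t) (\<gamma> t') = \<bar>t - t'\<bar>"
  shows "continuous_on {0..D} (\<lambda>t. \<gamma> t $ i)"
  unfolding continuous_on_iff
proof (intro ballI allI impI)
  fix x e assume x: "x \<in> {0..D}" and e: "(0::real) < e"
  show "\<exists>d>0. \<forall>x'\<in>{0..D}. dist x' x < d \<longrightarrow> dist (\<gamma> x' $ i) (\<gamma> x $ i) < e"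
  proof (intro exI[of _ e] conjI ballI impI)
    fix x' assume x': "x' \<in> {0..D}" and d: "dist x' x < e"
    have "\<bar>\<gamma> x' $ i - \<gamma> x $ i\<bar> \<le> \<bar>x' - x\<bar>" using l1dist_comp[of "\<gamma> x'" i "\<gamma> x"] iso x x' by auto
    thus "dist (\<gamma> x' $ i) (\<gamma> x $ i) < e" using d by (simp add: dist_real_def)
  qed (use e in auto)
qed

lemma reparam:
  fixes f :: "real \<Rightarrow> real^'n"
  assumes ab: "a \<le> b" and cont: "\<And>i. continuous_on {a..b} (\<lambda>u. f u $ i)"
    and mono: "\<And>i. (\<forall>u\<in>{a..b}. \<forall>v\<in>{a..b}. u \<le> v \<longrightarrow> f u $ i \<le> f v $ i) \<or>
                    (\<forall>u\<in>{a..b}. \<forall>v\<in>{a..b}. u \<le> v \<longrightarrow> f v $ i \<le> f u $ i)"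
  shows "\<exists>g. g 0 = f a \<and> g (l1dist (f a) (f b)) = f b \<and>
      (\<forall>t\<in>{0..l1dist (f a) (f b)}. g t \<in> f ` {a..b}) \<and>
      (\<forall>t\<in>{0..l1dist (f a) (f b)}. \<forall>t'\<in>{0..l1dist (f a) (f b)}. l1dist (g t) (g t') = \<bar>t - t'\<bar>)"
proof -
  define L where "L u = l1dist (f a) (f u)" for u
  have step: "L v = L u + l1dist (f u) (f v)" if uv: "a \<le> u" "u \<le> v" "v \<le> b" for u v
  proof -
    have "\<bar>f a $ i - f v $ i\<bar> = \<bar>f a $ i - f u $ i\<bar> + \<bar>f u $ i - f v $ i\<bar>" for i
    proof -
      from mono[of i] show ?thesis
      proof
        assume m: "\<forall>u\<in>{a..b}. \<forall>v\<in>{a..b}. u \<le> v \<longrightarrow> f u $ i \<le> f v $ i"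
        have "f a $ i \<le> f u $ i" "f u $ i \<le> f v $ i" using m uv by auto
        thus ?thesis by linarith
      next
        assume m: "\<forall>u\<in>{a..b}. \<forall>v\<in>{a..b}. u \<le> v \<longrightarrow> f v $ i \<le> f u $ i"
        have "f u $ i \<le> f a $ i" "f v $ i \<le> f u $ i" using m uv by auto
        thus ?thesis by linarith
      qed
    qed
    thus ?thesis unfolding L_def l1dist_def by (simp add: sum.distrib)
  qed
  have key: "l1dist (f u) (f v) = \<bar>L u - L v\<bar>" if "u \<in> {a..b}" "v \<in> {a..b}" for u v
  proof (cases "u \<le> v")
    case True thus ?thesis using step[of u v] that l1dist_nonneg[of "f u" "f v"] by auto
  next
    case False thus ?thesis using step[of v u] that l1dist_nonneg[of "f v" "f u"] l1dist_sym[of "f u" "f v"] by auto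
  qed
  have Lcont: "continuous_on {a..b} L"
    unfolding L_def l1dist_def
    by (intro continuous_intros cont)
  have La: "L a = 0" unfolding L_def l1dist_def by simp
  define D where "D = L b"
  have ex: "\<exists>u. u \<in> {a..b} \<and> L u = s" if "s \<in> {0..D}" for s
    using IVT'[of L a s b, OF _ _ ab Lcont] that La unfolding D_def by auto
  define g where "g s = f (SOME u. u \<in> {a..b} \<and> L u = s)" for s
  have g: "\<exists>u\<in>{a..b}. L u = s \<and> g s = f u" if "s \<in> {0..D}" for s
    using someI_ex[OF ex[OF that]] unfolding g_def by blast
  have D0: "D \<ge> 0" unfolding D_def L_def by (rule l1dist_nonneg)
  show ?thesis
  proof (intro exI[of _ g] conjI ballI)
    obtain u where u: "u \<in> {a..b}" "L u = 0" "g 0 = f u" using g[of 0] D0 by auto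
    have "l1dist (f u) (f a) = 0" using key[of u a] u ab La by auto
    thus "g 0 = f a" using u l1dist_zero by metis
  next
    obtain u where u: "u \<in> {a..b}" "L u = D" "g D = f u" using g[of D] D0 by auto
    have "l1dist (f u) (f b) = 0" using key[of u b] u ab unfolding D_def by auto
    thus "g (l1dist (f a) (f b)) = f b" using u l1dist_zero unfolding D_def L_def by metis
  next
    fix t assume "t \<in> {0..l1dist (f a) (f b)}"
    hence "t \<in> {0..D}" unfolding D_def L_def .
    thus "g t \<in> f ` {a..b}" using g by blast
  next
    fix t t' assume "t \<in> {0..l1dist (f a) (f b)}" "t' \<in> {0..l1dist (f a) (f b)}"
    hence tt: "t \<in> {0..D}" "t' \<in> {0..D}" unfolding D_def L_def .
    obtain u where u: "u \<in> {a..b}" "L u = t" "g t = f u" using g[OF tt(1)] by auto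
    obtain v where v: "v \<in> {a..b}" "L v = t'" "g t' = f v" using g[OF tt(2)] by auto
    show "l1dist (g t) (g t') = \<bar>t - t'\<bar>" using key[OF u(1) v(1)] u v by simp
  qed
qed



definition pset :: "real \<Rightarrow> (real^'n) set \<Rightarrow> (real^'n) set" where
  "pset lam Z = {x. \<exists>z\<in>Z. \<forall>i. compat lam (x$i) (z$i)}"

definition cl01 :: "real \<Rightarrow> real" where "cl01 u = max 0 (min 1 u)"

lemma cl01_props: "0 \<le> cl01 u" "cl01 u \<le> 1" "u \<le> v \<Longrightarrow> cl01 u \<le> cl01 v"
  "u \<le> 0 \<Longrightarrow> cl01 u = 0" "1 \<le> u \<Longrightarrow> cl01 u = 1"
  unfolding cl01_def by auto

lemma cl01_cont: "continuous_on S (\<lambda>u. cl01 (u - c))"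
  unfolding cl01_def by (intro continuous_intros)

lemma lin_between: assumes "0 \<le> c" "c \<le> (1::real)"
  shows "min p q \<le> p + c*(q-p)" "p + c*(q-p) \<le> max p q"
proof -
  have "(p \<le> q \<and> 0 \<le> c*(q-p) \<and> c*(q-p) \<le> q-p) \<or> (q \<le> p \<and> q-p \<le> c*(q-p) \<and> c*(q-p) \<le> 0)"
  proof (cases "p \<le> q")
    case True thus ?thesis using assms by (simp add: mult_left_le_one_le)
  next
    case False
    have "c*(p-q) \<le> p-q" using assms False by (simp add: mult_left_le_one_le)
    moreover have "0 \<le> c*(p-q)" using assms False by simp
    ultimately show ?thesis using False by (simp add: algebra_simps)
  qed
  thus "min p q \<le> p + c*(q-p)" "p + c*(q-p) \<le> max p q" by auto
qed

lemma clampF_bounds: "min p p' \<le> clampF p p' y" "clampF p p' y \<le> max p p'"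
  unfolding clampF_def by auto

lemma pset_convex:
  fixes Z :: "(real^'n) set"
  assumes lam: "lam > 0" and Zc: "l1_convex Z"
  shows "l1_convex (pset lam Z)"
  unfolding l1_convex_def
proof (intro ballI)
  fix p p' assume "p \<in> pset lam Z" "p' \<in> pset lam Z"
  then obtain z z' where z: "z \<in> Z" "\<And>i. compat lam (p$i) (z$i)"
    and z': "z' \<in> Z" "\<And>i. compat lam (p'$i) (z'$i)" unfolding pset_def by blast
  define D where "D = l1dist z z'"
  obtain \<gamma> :: "real \<Rightarrow> real^'n" where g0: "\<gamma> 0 = z" and gD: "\<gamma> D = z'"
    and gZ: "\<forall>t\<in>{0..D}. \<gamma> t \<in> Z"
    and iso: "\<forall>t\<in>{0..D}. \<forall>t'\<in>{0..D}. l1dist (\<gamma> t) (\<gamma> t') = \<bar>t - t'\<bar>"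
    using Zc z(1) z'(1) unfolding l1_convex_def D_def by blast
  have D0: "D \<ge> 0" unfolding D_def by (rule l1dist_nonneg)
  define w where "w u = \<gamma> (D * cl01 (u - 1))" for u
  define F where "F i = clampF (p$i) (p'$i)" for i
  define agree where "agree i \<longleftrightarrow> (z$i \<le> z'$i \<and> p$i \<le> p'$i) \<or> (z'$i \<le> z$i \<and> p'$i \<le> p$i)" for i
  define f where "f u = (\<chi> i. if agree i then p$i + cl01 (u - 0) * (F i (z$i) - p$i) + (F i (w u $ i) - F i (z$i))
      + cl01 (u - 2) * (p'$i - F i (z'$i)) else p$i + (u/3) * (p'$i - p$i))" for u
  have tD: "0 \<le> D * cl01 (u - 1)" "D * cl01 (u - 1) \<le> D" for u
    using D0 cl01_props(1,2)[of "u-1"] by (auto simp: mult_left_le)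
  have wZ: "w u \<in> Z" for u using gZ tD unfolding w_def by auto
  have w0: "u \<le> 1 \<Longrightarrow> w u = z" for u using g0 cl01_props(4)[of "u-1"] unfolding w_def by simp
  have w3: "2 \<le> u \<Longrightarrow> w u = z'" for u using gD cl01_props(5)[of "u-1"] unfolding w_def by simp
  have wmono: "(z$i \<le> z'$i \<longrightarrow> w u $ i \<le> w v $ i) \<and> (z'$i \<le> z$i \<longrightarrow> w v $ i \<le> w u $ i)"
    if uv: "u \<le> v" for u v i
  proof -
    have "D * cl01 (u - 1) \<le> D * cl01 (v - 1)"
      using uv D0 cl01_props(3)[of "u-1" "v-1"] by (simp add: mult_left_mono)
    thus ?thesis using geo_mono[OF iso tD(1)[of u] _ tD(2)[of v], of i] g0 gD unfolding w_def by auto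
  qed
  have wbetw: "min (z$i) (z'$i) \<le> w u $ i \<and> w u $ i \<le> max (z$i) (z'$i)" for u i
  proof -
    have A: "z$i \<le> z'$i \<longrightarrow> z$i \<le> w u $ i \<and> w u $ i \<le> z'$i"
      using geo_mono(1)[OF iso order_refl tD(1)[of u] tD(2)[of u], of i]
        geo_mono(1)[OF iso tD(1)[of u] tD(2)[of u] order_refl, of i] g0 gD unfolding w_def by auto
    have B: "z'$i \<le> z$i \<longrightarrow> z'$i \<le> w u $ i \<and> w u $ i \<le> z$i"
      using geo_mono(2)[OF iso order_refl tD(1)[of u] tD(2)[of u], of i]
        geo_mono(2)[OF iso tD(1)[of u] tD(2)[of u] order_refl, of i] g0 gD unfolding w_def by auto
    show ?thesis using A B by linarith
  qed
  have fi: "f u $ i = (if agree i then p$i + cl01 (u - 0) * (F i (z$i) - p$i) + (F i (w u $ i) - F i (z$i))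
      + cl01 (u - 2) * (p'$i - F i (z'$i)) else p$i + (u/3) * (p'$i - p$i))" for u i
    unfolding f_def by simp
  have f0: "f 0 = p"
    unfolding vec_eq_iff fi using w0[of 0] cl01_props(4) by simp
  have f3: "f 3 = p'"
    unfolding vec_eq_iff fi using w3[of 3] cl01_props(5) by simp
  have wc: "continuous_on {0..3} (\<lambda>u. w u $ i)" for i
  proof -
    have "continuous_on {0..3} (\<lambda>u. D * cl01 (u - 1))" by (intro continuous_intros cl01_cont)
    moreover have "(\<lambda>u. D * cl01 (u - 1)) ` {0..3} \<subseteq> {0..D}" using tD by auto
    ultimately show ?thesis unfolding w_def
      using continuous_on_compose2[OF geo_cont[OF iso, of i]] by blast
  qed
  have fc: "continuous_on {0..3} (\<lambda>u. f u $ i)" for i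
  proof (cases "agree i")
    case True
    have "continuous_on {0..3} (\<lambda>u. F i (w u $ i))" unfolding F_def clampF_def
      by (intro continuous_intros wc)
    hence "continuous_on {0..3} (\<lambda>u. p$i + cl01 (u - 0) * (F i (z$i) - p$i) + (F i (w u $ i) - F i (z$i))
      + cl01 (u - 2) * (p'$i - F i (z'$i)))" by (intro continuous_intros cl01_cont)
    thus ?thesis using True by (simp add: fi)
  next
    case False
    have "continuous_on {0..3} (\<lambda>u. p$i + (u/3) * (p'$i - p$i))" by (intro continuous_intros) auto
    thus ?thesis using False by (simp add: fi)
  qed
  have fm: "(\<forall>u\<in>{0..3}. \<forall>v\<in>{0..3}. u \<le> v \<longrightarrow> f u $ i \<le> f v $ i) \<or>
            (\<forall>u\<in>{0..3}. \<forall>v\<in>{0..3}. u \<le> v \<longrightarrow> f v $ i \<le> f u $ i)" for i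
  proof (cases "agree i")
    case True
    show ?thesis
    proof (cases "z$i \<le> z'$i \<and> p$i \<le> p'$i")
      case inc: True
      have c1: "F i (z$i) - p$i \<ge> 0" "p'$i - F i (z'$i) \<ge> 0"
        using inc unfolding F_def clampF_def by auto
      have "f u $ i \<le> f v $ i" if "u \<le> v" for u v
      proof -
        have "cl01 (u - 0) * (F i (z$i) - p$i) \<le> cl01 (v - 0) * (F i (z$i) - p$i)"
          using c1 cl01_props(3)[of "u-0" "v-0"] that by (simp add: mult_right_mono)
        moreover have "cl01 (u - 2) * (p'$i - F i (z'$i)) \<le> cl01 (v - 2) * (p'$i - F i (z'$i))"
          using c1 cl01_props(3)[of "u-2" "v-2"] that by (simp add: mult_right_mono)
        moreover have "F i (w u $ i) \<le> F i (w v $ i)"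
          using wmono[OF that, of i] inc clampF_mono unfolding F_def by blast
        ultimately show ?thesis using True by (simp add: fi)
      qed
      thus ?thesis by blast
    next
      case dec: False
      hence dec: "z'$i \<le> z$i \<and> p'$i \<le> p$i" using True unfolding agree_def by blast
      have c1: "F i (z$i) - p$i \<le> 0" "p'$i - F i (z'$i) \<le> 0"
        using dec unfolding F_def clampF_def by auto
      have "f v $ i \<le> f u $ i" if "u \<le> v" for u v
      proof -
        have "cl01 (v - 0) * (F i (z$i) - p$i) \<le> cl01 (u - 0) * (F i (z$i) - p$i)"
          using c1 cl01_props(3)[of "u-0" "v-0"] that by (simp add: mult_right_mono_neg)
        moreover have "cl01 (v - 2) * (p'$i - F i (z'$i)) \<le> cl01 (u - 2) * (p'$i - F i (z'$i))"
          using c1 cl01_props(3)[of "u-2" "v-2"] that by (simp add: mult_right_mono_neg)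
        moreover have "F i (w v $ i) \<le> F i (w u $ i)"
          using wmono[OF that, of i] dec clampF_mono unfolding F_def by blast
        ultimately show ?thesis using True by (simp add: fi)
      qed
      thus ?thesis by blast
    qed
  next
    case False
    show ?thesis
    proof (cases "p$i \<le> p'$i")
      case True
      have "f u $ i \<le> f v $ i" if "u \<le> v" for u v
      proof -
        have "(u/3) * (p'$i - p$i) \<le> (v/3) * (p'$i - p$i)"
          using True that by (intro mult_right_mono) auto
        thus ?thesis using False by (simp add: fi)
      qed
      thus ?thesis by blast
    next
      case F2: False
      have "f v $ i \<le> f u $ i" if "u \<le> v" for u v
      proof -
        have "(v/3) * (p'$i - p$i) \<le> (u/3) * (p'$i - p$i)"
          using F2 that by (intro mult_right_mono_neg) auto
        thus ?thesis using False by (simp add: fi)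
      qed
      thus ?thesis by blast
    qed
  qed
  have fP: "f u \<in> pset lam Z" if u: "u \<in> {0..3}" for u
    unfolding pset_def
  proof (intro CollectI bexI[of _ "w u"] allI)
    show "w u \<in> Z" by (rule wZ)
    fix i
    show "compat lam (f u $ i) (w u $ i)"
    proof (cases "agree i")
      case True
      have Fz: "compat lam (F i (z$i)) (z$i)" unfolding F_def
        by (rule clampF_compat[OF lam z(2) z'(2)]) (use True in \<open>auto simp: agree_def\<close>)
      have Fz': "compat lam (F i (z'$i)) (z'$i)" unfolding F_def
        by (rule clampF_compat[OF lam z(2) z'(2)]) (use True in \<open>auto simp: agree_def\<close>)
      consider "u \<le> 1" | "1 \<le> u" "u \<le> 2" | "2 \<le> u" by linarith
      thus ?thesis
      proof cases
        case 1
        have e: "f u $ i = p$i + cl01 u * (F i (z$i) - p$i)"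
          using True w0[OF 1] cl01_props(4)[of "u-2"] 1 by (simp add: fi)
        show ?thesis unfolding e w0[OF 1]
          by (rule compat_between[OF lam z(2) Fz])
             (use lin_between[OF cl01_props(1,2)[of u], of "p$i" "F i (z$i)"] in auto)
      next
        case 2
        have e: "f u $ i = F i (w u $ i)"
          using True cl01_props(5)[of "u-0"] cl01_props(4)[of "u-2"] 2 by (simp add: fi)
        show ?thesis unfolding e F_def
          by (rule clampF_compat[OF lam z(2) z'(2)]) (use True wbetw in \<open>auto simp: agree_def\<close>)
      next
        case 3
        have e: "f u $ i = F i (z'$i) + cl01 (u-2) * (p'$i - F i (z'$i))"
          using True w3[OF 3] cl01_props(5)[of "u-0"] 3 by (simp add: fi)
        show ?thesis unfolding e w3[OF 3]
          by (rule compat_between[OF lam Fz' z'(2)])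
             (use lin_between[OF cl01_props(1,2)[of "u-2"], of "F i (z'$i)" "p'$i"] in auto)
      qed
    next
      case False
      have e: "f u $ i = p$i + (u/3) * (p'$i - p$i)" using False by (simp add: fi)
      have d: "(z$i < z'$i \<and> p'$i < p$i) \<or> (z'$i < z$i \<and> p$i < p'$i)"
        using False unfolding agree_def by linarith
      have c: "0 \<le> u/3" "u/3 \<le> 1" using u by auto
      show ?thesis unfolding e
        by (rule compat_mismatch[OF lam z(2) z'(2) d])
           (use wbetw lin_between[OF c, of "p$i" "p'$i"] in auto)
    qed
  qed
  obtain g where g: "g 0 = f 0" "g (l1dist (f 0) (f 3)) = f 3"
      "\<forall>t\<in>{0..l1dist (f 0) (f 3)}. g t \<in> f ` {0..3}"
      "\<forall>t\<in>{0..l1dist (f 0) (f 3)}. \<forall>t'\<in>{0..l1dist (f 0) (f 3)}. l1dist (g t) (g t') = \<bar>t - t'\<bar>"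
    using reparam[of 0 3 f, OF _ fc fm] by auto
  show "\<exists>\<gamma>. \<gamma> 0 = p \<and> \<gamma> (l1dist p p') = p' \<and> (\<forall>t\<in>{0..l1dist p p'}. \<gamma> t \<in> pset lam Z) \<and>
      (\<forall>t\<in>{0..l1dist p p'}. \<forall>t'\<in>{0..l1dist p p'}. l1dist (\<gamma> t) (\<gamma> t') = \<bar>t - t'\<bar>)"
    using g fP unfolding f0 f3 by (intro exI[of _ g]) (auto simp: image_iff)
qed



lemma mem_pixel:
  assumes lam: "lam > 0"
  shows "x \<in> pixel lam h \<longleftrightarrow> (\<forall>i. \<bar>x$i - lam * h$i\<bar> \<le> lam/2)"
proof
  assume "x \<in> pixel lam h"
  then obtain q where q: "x = lam *\<^sub>R (h + q)" "q \<in> unit_cube" unfolding pixel_def by blast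
  show "\<forall>i. \<bar>x$i - lam * h$i\<bar> \<le> lam/2"
  proof
    fix i
    have "x$i - lam * h$i = lam * q$i" using q(1) by (simp add: algebra_simps)
    moreover have "\<bar>q$i\<bar> \<le> 1/2" using q(2) unfolding unit_cube_def by auto
    ultimately show "\<bar>x$i - lam * h$i\<bar> \<le> lam/2" using lam by (simp add: abs_mult)
  qed
next
  assume A: "\<forall>i. \<bar>x$i - lam * h$i\<bar> \<le> lam/2"
  define q where "q = (1/lam) *\<^sub>R x - h"
  have "h + q = (1/lam) *\<^sub>R x" unfolding q_def by simp
  hence "x = lam *\<^sub>R (h + q)" using lam by simp
  moreover have "q \<in> unit_cube" unfolding unit_cube_def
  proof (intro CollectI allI)
    fix i
    have "q$i = (x$i - lam * h$i) / lam" unfolding q_def using lam by (simp add: field_simps)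
    hence "\<bar>q$i\<bar> = \<bar>x$i - lam * h$i\<bar> / lam" using lam by simp
    also have "\<dots> \<le> (lam/2) / lam" using A[rule_format, of i] lam by (intro divide_right_mono) auto
    also have "\<dots> = 1/2" using lam by simp
    finally show "\<bar>q$i\<bar> \<le> 1/2" .
  qed
  ultimately show "x \<in> pixel lam h" unfolding pixel_def by blast
qed

lemma cell_iff: fixes lam a :: real assumes lam: "lam > 0"
  shows "(lam * of_int m \<le> a \<and> a \<le> lam * (of_int m + 1)) \<longleftrightarrow> \<bar>a - lam * (of_int m + 1/2)\<bar> \<le> lam/2"
proof -
  have "lam * (of_int m + 1/2) = lam * of_int m + lam/2" by (simp add: algebra_simps)
  moreover have "lam * (of_int m + 1) = lam * of_int m + lam" by (simp add: algebra_simps)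
  moreover have "\<And>c. (c \<le> a \<and> a \<le> c + lam) = (\<bar>a - (c + lam/2)\<bar> \<le> lam/2)" by arith
  ultimately show ?thesis by simp
qed

lemma pset_eq:
  assumes lam: "lam > 0"
  shows "pset lam Z = (\<Union>h\<in>{h. half_int_point h \<and> (\<exists>z\<in>Z. z \<in> pixel lam h)}. pixel lam h)"
proof (intro equalityI subsetI)
  fix x assume "x \<in> pset lam Z"
  then obtain z where z: "z \<in> Z" "\<And>i. compat lam (x$i) (z$i)" unfolding pset_def by blast
  have "\<forall>i. \<exists>m::int. lam * of_int m \<le> x$i \<and> x$i \<le> lam * (of_int m + 1) \<and> lam * of_int m \<le> z$i \<and> z$i \<le> lam * (of_int m + 1)"
    using z(2) unfolding compat_def by blast
  then obtain mm :: "'a \<Rightarrow> int" where mm: "\<And>i. lam * of_int (mm i) \<le> x$i \<and> x$i \<le> lam * (of_int (mm i) + 1) \<and> lam * of_int (mm i) \<le> z$i \<and> z$i \<le> lam * (of_int (mm i) + 1)"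
    by metis
  define h :: "real^'a" where "h = (\<chi> i. of_int (mm i) + 1/2)"
  have hh: "half_int_point h" unfolding half_int_point_def h_def by auto
  have "x \<in> pixel lam h" "z \<in> pixel lam h" unfolding mem_pixel[OF lam] h_def
    using mm cell_iff[OF lam] by auto
  thus "x \<in> (\<Union>h\<in>{h. half_int_point h \<and> (\<exists>z\<in>Z. z \<in> pixel lam h)}. pixel lam h)"
    using hh z(1) by blast
next
  fix x assume "x \<in> (\<Union>h\<in>{h. half_int_point h \<and> (\<exists>z\<in>Z. z \<in> pixel lam h)}. pixel lam h)"
  then obtain h z where h: "half_int_point h" "z \<in> Z" "z \<in> pixel lam h" "x \<in> pixel lam h" by blast
  have "compat lam (x$i) (z$i)" for i
  proof -
    obtain m :: int where m: "h$i = of_int m + 1/2" using h(1) unfolding half_int_point_def by blast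
    have "\<bar>x$i - lam * (of_int m + 1/2)\<bar> \<le> lam/2" "\<bar>z$i - lam * (of_int m + 1/2)\<bar> \<le> lam/2"
      using h(3,4) m unfolding mem_pixel[OF lam] by metis+
    thus ?thesis unfolding compat_def using cell_iff[OF lam] by blast
  qed
  thus "x \<in> pset lam Z" unfolding pset_def using h(2) by blast
qed

lemma finite_vecs: assumes "finite S" shows "finite {h::real^'a. \<forall>i. h$i \<in> S}"
proof -
  have "{h::real^'a. \<forall>i. h$i \<in> S} \<subseteq> (\<lambda>f. \<chi> i. f i) ` (PiE UNIV (\<lambda>_. S))"
  proof
    fix h :: "real^'a" assume "h \<in> {h. \<forall>i. h$i \<in> S}"
    hence "(\<lambda>i. h$i) \<in> PiE UNIV (\<lambda>_. S)" by auto
    moreover have "h = (\<chi> i. (\<lambda>i. h$i) i)" by simp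
    ultimately show "h \<in> (\<lambda>f. \<chi> i. f i) ` (PiE UNIV (\<lambda>_. S))" by blast
  qed
  moreover have "finite (PiE (UNIV::'a set) (\<lambda>_. S))" using assms by (intro finite_PiE) auto
  ultimately show ?thesis using finite_subset finite_imageI by blast
qed

lemma finite_F:
  fixes Z :: "(real^'a) set"
  assumes lam: "lam > 0" and bd: "bounded Z"
  shows "finite {h. half_int_point h \<and> (\<exists>z\<in>Z. z \<in> pixel lam h)}"
proof -
  obtain B where B: "\<And>z. z \<in> Z \<Longrightarrow> norm z \<le> B" using bd bounded_iff by blast
  define N where "N = \<lceil>B/lam\<rceil> + 1"
  define S where "S = (\<lambda>m::int. of_int m + (1/2::real)) ` {-N..N}"
  have "{h. half_int_point h \<and> (\<exists>z\<in>Z. z \<in> pixel lam h)} \<subseteq> {h. \<forall>i. h$i \<in> S}"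
  proof (intro subsetI CollectI allI)
    fix h :: "real^'a" and i assume "h \<in> {h. half_int_point h \<and> (\<exists>z\<in>Z. z \<in> pixel lam h)}"
    then obtain z where h: "half_int_point h" "z \<in> Z" "z \<in> pixel lam h" by blast
    obtain m :: int where m: "h$i = of_int m + 1/2" using h(1) unfolding half_int_point_def by blast
    have "\<bar>z$i\<bar> \<le> B" using B[OF h(2)] component_le_norm_cart[of z i] by linarith
    moreover have "\<bar>z$i - lam * h$i\<bar> \<le> lam/2" using h(3) mem_pixel[OF lam] by blast
    ultimately have "\<bar>lam * h$i\<bar> \<le> B + lam/2" by linarith
    hence "lam * \<bar>h$i\<bar> \<le> B + lam/2" using lam by (simp add: abs_mult)
    hence "\<bar>h$i\<bar> \<le> B/lam + 1/2" using lam by (simp add: field_simps)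
    hence "\<bar>of_int m + 1/2\<bar> \<le> B/lam + 1/2" using m by simp
    moreover have "B/lam \<le> of_int \<lceil>B/lam\<rceil>" by (rule le_of_int_ceiling)
    ultimately have "\<bar>m\<bar> \<le> N" unfolding N_def by linarith
    hence "m \<in> {-N..N}" by auto
    thus "h$i \<in> S" unfolding S_def m by blast
  qed
  moreover have "finite S" unfolding S_def by simp
  ultimately show ?thesis using finite_vecs finite_subset by blast
qed



theorem theorem3p2:
  fixes Z :: "(real^'n) set" and \<epsilon> :: real
  assumes "compact Z" and "Z \<noteq> {}" and "l1_convex Z" and "\<epsilon> > 0"
  shows "\<exists>P :: (real^'n) set. P \<noteq> {} \<and> pixellated P \<and> l1_convex P \<and> l1_hausdist Z P < \<epsilon>"
proof -
  have n: "real CARD('n) > 0" by simp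
  define \<delta> where "\<delta> = \<epsilon>/2"
  define lam where "lam = \<epsilon> / (2 * real CARD('n))"
  have lam: "lam > 0" unfolding lam_def using assms(4) n by simp
  have d: "\<delta> > 0" unfolding \<delta>_def using assms(4) by simp
  have cl: "real CARD('n) * lam = \<delta>" unfolding lam_def \<delta>_def using n by simp
  define P where "P = pset lam Z"
  have bd: "bounded Z" using assms(1) by (rule compact_imp_bounded)
  have ZP: "Z \<subseteq> P" unfolding P_def pset_def using compat_refl[OF lam] by blast
  have ne: "P \<noteq> {}" using ZP assms(2) by blast
  have pix: "pixellated P" unfolding pixellated_def lambda_pixellated_def
  proof (intro exI[of _ lam] conjI)
    show "lam > 0" by (rule lam)
    show "\<exists>F. finite F \<and> (\<forall>h\<in>F. half_int_point h) \<and> P = (\<Union>h\<in>F. pixel lam h)"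
      by (intro exI[of _ "{h. half_int_point h \<and> (\<exists>z\<in>Z. z \<in> pixel lam h)}"] conjI)
         (use finite_F[OF lam bd] pset_eq[OF lam, of Z] in \<open>auto simp: P_def\<close>)
  qed
  have cvx: "l1_convex P" unfolding P_def by (rule pset_convex[OF lam assms(3)])
  have t1: "Z \<subseteq> l1_thicken P \<delta>"
  proof
    fix z assume "z \<in> Z"
    hence "z \<in> P" using ZP by blast
    moreover have "(0::real^'n) \<in> l1_ball" unfolding l1_ball_def by simp
    moreover have "z = z + \<delta> *\<^sub>R 0" by simp
    ultimately show "z \<in> l1_thicken P \<delta>" unfolding l1_thicken_def by blast
  qed
  have t2: "P \<subseteq> l1_thicken Z \<delta>"
  proof
    fix x assume "x \<in> P"
    then obtain z where z: "z \<in> Z" "\<And>i. compat lam (x$i) (z$i)" unfolding P_def pset_def by blast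
    define b where "b = (1/\<delta>) *\<^sub>R (x - z)"
    have "(\<Sum>i\<in>UNIV. \<bar>x$i - z$i\<bar>) \<le> (\<Sum>i\<in>(UNIV::'n set). lam)"
      by (rule sum_mono) (use compat_dist z(2) in auto)
    hence s: "(\<Sum>i\<in>UNIV. \<bar>x$i - z$i\<bar>) \<le> \<delta>" using cl by simp
    have "(\<Sum>i\<in>UNIV. \<bar>b$i\<bar>) = (\<Sum>i\<in>UNIV. \<bar>x$i - z$i\<bar>) / \<delta>"
      unfolding b_def using d by (simp add: sum_divide_distrib abs_mult)
    also have "\<dots> \<le> 1" using s d by simp
    finally have "b \<in> l1_ball" unfolding l1_ball_def by simp
    moreover have "x = z + \<delta> *\<^sub>R b" unfolding b_def using d by simp
    ultimately show "x \<in> l1_thicken Z \<delta>" unfolding l1_thicken_def using z(1) by blast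
  qed
  have "l1_hausdist Z P \<le> \<delta>" unfolding l1_hausdist_def
    by (rule cInf_lower) (use t1 t2 d in \<open>auto intro: bdd_belowI[of _ 0]\<close>)
  hence "l1_hausdist Z P < \<epsilon>" unfolding \<delta>_def using assms(4) by simp
  thus ?thesis using ne pix cvx by blast
qed


end
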